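(* Let $N\ge 4$ be an even integer and $\Lambda=\{1,\dots,N\}$ a ring of sites with periodic boundary conditions (indices taken mod $N$). To each site $i\in\Lambda$ attach two spin-$1/2$ degrees of freedom labelled $(i,\mathrm{L})$ and $(i,\mathrm{R})$, so the total Hilbert space is $(\mathbb{C}^{2})^{\otimes 2N}$. For each $i\in\Lambda$ let the bond $i^*$ denote the pair of spins $((i,\mathrm{R}),(i+1,\mathrm{L}))$, and define the two bond states $$|\boldsymbol{\downarrow}\rangle_{i^*}=\tfrac{1}{\sqrt2}\big(|\uparrow\downarrow\rangle-|\downarrow\uparrow\rangle\big)_{(i,\mathrm{R}),(i+1,\mathrm{L})},\qquad |\boldsymbol{\uparrow}\rangle_{i^*}=|\uparrow\uparrow\rangle_{(i,\mathrm{R}),(i+1,\mathrm{L})}.$$ Let $$Q^+_{\mathrm{frac}}=\sum_{j\in\Lambda}(-1)^j\,|\boldsymbol{\uparrow}\boldsymbol{\uparrow}\rangle\langle\boldsymbol{\downarrow}\boldsymbol{\downarrow}|_{j^*,(j+1)^*},\qquad |\mathcal{S}^{\mathrm{frac}}_n\rangle=(Q^+_{\mathrm{frac}})^n\bigotimes_{j\in\Lambda}|\boldsymbol{\downarrow}\rangle_{j^*}\quad(n\ge 0).$$ Then for every $n\ge0$ and every $i\in\Lambda$ there exist (unnormalized, possibly zero) vectors $|\Xi^0_{\sigma\sigma'}\rangle$ ($\sigma,\sigma'\in\{\uparrow,\downarrow\}$), $|\Xi^1\rangle$, $|\Xi^2\rangle$ in the Hilbert space of all spins belonging to bonds other than $(i-1)^*,i^*,(i+1)^*$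 such that $$|\mathcal{S}^{\mathrm{frac}}_n\rangle=\sum_{\sigma,\sigma'\in\{\uparrow,\downarrow\}}|\boldsymbol{\sigma}\boldsymbol{\downarrow}\boldsymbol{\sigma'}\rangle_{(i-1)^*,i^*,(i+1)^*}\otimes|\Xi^0_{\sigma\sigma'}\rangle+\big(|\boldsymbol{\uparrow}\boldsymbol{\uparrow}\boldsymbol{\downarrow}\rangle-|\boldsymbol{\downarrow}\boldsymbol{\uparrow}\boldsymbol{\uparrow}\rangle\big)_{(i-1)^*,i^*,(i+1)^*}\otimes|\Xi^1\rangle+|\boldsymbol{\uparrow}\boldsymbol{\uparrow}\boldsymbol{\uparrow}\rangle_{(i-1)^*,i^*,(i+1)^*}\otimes|\Xi^2\rangle,$$ where $|\boldsymbol{a}\boldsymbol{b}\boldsymbol{c}\rangle_{(i-1)^*,i^*,(i+1)^*}=|\boldsymbol{a}\rangle_{(i-1)^*}\otimes|\boldsymbol{b}\rangle_{i^*}\otimes|\boldsymbol{c}\rangle_{(i+1)^*}$.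
   Context: This is the "fractionalized" spin-1/2 description of the spin-1 AKLT chain: each spin-1 site is split into two spin-1/2's, and the scar tower is built from the valence-bond-solid state $\bigotimes_j|\boldsymbol{\downarrow}\rangle_{j^*}$ by the operator $Q^+_{\mathrm{frac}}$, which turns two adjacent singlet bonds into two fully polarized bonds with a staggered sign. Bold letters denote bond states as defined in the claim. *)

theory Defs
  imports Complex_Main
begin

(* Spins are labelled (i, side) with i \<in> {1..N} a site and side = False for L,
   side = True for R.  A basis configuration assigns True (= up) or False (= down)
   to each spin; spins outside the lattice are fixed to False. *)

type_synonym cfg = "nat \<times> bool \<Rightarrow> bool"
type_synonym state = "cfg \<Rightarrow> complex"

definition spins :: "nat \<Rightarrow> (nat \<times> bool) set" where
  "spins N = {1..N} \<times> UNIV"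

definition Cfg :: "nat \<Rightarrow> cfg set" where
  "Cfg N = {c. \<forall>s. s \<notin> spins N \<longrightarrow> c s = False}"

definition nxt :: "nat \<Rightarrow> nat \<Rightarrow> nat" where
  "nxt N j = (if j = N then 1 else j + 1)"

definition prv :: "nat \<Rightarrow> nat \<Rightarrow> nat" where
  "prv N j = (if j = 1 then N else j - 1)"

(* bond state amplitudes on the bond j* = ((j,R),(j+1,L)):
   bd False = singlet (bold down), bd True = |up up> (bold up) *)
definition bd :: "bool \<Rightarrow> bool \<Rightarrow> bool \<Rightarrow> complex" where
  "bd b x y = (if b then (if x \<and> y then 1 else 0)
               else (if x \<and> \<not> y then 1 / complex_of_real (sqrt 2)
                     else if \<not> x \<and> y then - 1 / complex_of_real (sqrt 2) else 0))"

definition bondamp :: "nat \<Rightarrow> bool \<Rightarrow> nat \<Rightarrow> cfg \<Rightarrow> complex" where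
  "bondamp N b j c = bd b (c (j, True)) (c (nxt N j, False))"

(* |up up><down down| on bonds j*, (j+1)* *)
definition Qterm :: "nat \<Rightarrow> nat \<Rightarrow> state \<Rightarrow> state" where
  "Qterm N j \<psi> c =
     bondamp N True j c * bondamp N True (nxt N j) c *
     (\<Sum>x\<in>UNIV. \<Sum>y\<in>UNIV. \<Sum>z\<in>UNIV. \<Sum>w\<in>UNIV.
        cnj (bd False x y * bd False z w) *
        \<psi> (c((j, True) := x, (nxt N j, False) := y,
              (nxt N j, True) := z, (nxt N (nxt N j), False) := w)))"

definition Qfrac :: "nat \<Rightarrow> state \<Rightarrow> state" where
  "Qfrac N \<psi> = (\<lambda>c. \<Sum>j\<in>{1..N}. (-1) ^ j * Qterm N j \<psi> c)"

definition vbs :: "nat \<Rightarrow> state" where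
  "vbs N = (\<lambda>c. \<Prod>j\<in>{1..N}. bondamp N False j c)"

definition scar :: "nat \<Rightarrow> nat \<Rightarrow> state" where
  "scar N n = (Qfrac N ^^ n) (vbs N)"

definition tb :: "nat \<Rightarrow> nat \<Rightarrow> bool \<Rightarrow> bool \<Rightarrow> bool \<Rightarrow> cfg \<Rightarrow> complex" where
  "tb N i a b d c = bondamp N a (prv N i) c * bondamp N b i c * bondamp N d (nxt N i) c"

definition six :: "nat \<Rightarrow> nat \<Rightarrow> (nat \<times> bool) set" where
  "six N i = {(prv N i, True), (i, False), (i, True), (nxt N i, False),
              (nxt N i, True), (nxt N (nxt N i), False)}"

(* a vector of the Hilbert space of the remaining spins = amplitude function
   depending only on spins outside the six *)
definition outside :: "nat \<Rightarrow> nat \<Rightarrow> state \<Rightarrow> bool" where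
  "outside N i \<Xi> \<longleftrightarrow> (\<forall>c c'. (\<forall>s. s \<notin> six N i \<longrightarrow> c s = c' s) \<longrightarrow> \<Xi> c = \<Xi> c')"

end

theory Submission
  imports Defs
begin

lemma ip: "(\<Sum>x\<in>UNIV. \<Sum>y\<in>UNIV. cnj (bd False x y) * bd b x y) = (if b then 0 else 1)"
  apply (cases b) 
  subgoal by (simp add: bd_def UNIV_bool)
  subgoal apply (simp add: bd_def UNIV_bool) 
    apply (simp add: divide_inverse flip: of_real_inverse of_real_mult of_real_add)
    done
  done

lemma nxt_in: "j \<in> {1..N} \<Longrightarrow> nxt N j \<in> {1..N}" by (auto simp: nxt_def)
lemma prv_in: "j \<in> {1..N} \<Longrightarrow> prv N j \<in> {1..N}" by (auto simp: prv_def)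
lemma nxt_prv: "j \<in> {1..N} \<Longrightarrow> nxt N (prv N j) = j" by (auto simp: nxt_def prv_def)
lemma prv_nxt: "j \<in> {1..N} \<Longrightarrow> prv N (nxt N j) = j" by (auto simp: nxt_def prv_def)
lemma nxt_eq_iff: "j \<in> {1..N} \<Longrightarrow> k \<in> {1..N} \<Longrightarrow> (nxt N j = k) = (j = prv N k)"
  by (auto simp: nxt_def prv_def)
lemma nxt_inj: "j \<in> {1..N} \<Longrightarrow> k \<in> {1..N} \<Longrightarrow> (nxt N j = nxt N k) = (j = k)"
  by (auto simp: nxt_def)
lemma nxt_neq: "N \<ge> 2 \<Longrightarrow> j \<in> {1..N} \<Longrightarrow> nxt N j \<noteq> j" by (auto simp: nxt_def)
lemma nxt2_neq: "N \<ge> 3 \<Longrightarrow> j \<in> {1..N} \<Longrightarrow> nxt N (nxt N j) \<noteq> j" by (auto simp: nxt_def)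
lemma prv_neq: "N \<ge> 2 \<Longrightarrow> j \<in> {1..N} \<Longrightarrow> prv N j \<noteq> j" by (auto simp: prv_def)
lemma prv_neq_nxt: "N \<ge> 3 \<Longrightarrow> j \<in> {1..N} \<Longrightarrow> prv N j \<noteq> nxt N j" by (auto simp: nxt_def prv_def)
lemma sign_prv: "even N \<Longrightarrow> j \<in> {1..N} \<Longrightarrow> (-1::complex) ^ (prv N j) = - ((-1) ^ j)"
  by (cases j) (auto simp: prv_def)

definition psB :: "nat \<Rightarrow> nat set \<Rightarrow> state" where
  "psB N S c = (\<Prod>k\<in>{1..N}. bondamp N (k \<in> S) k c)"

definition liftB :: "nat \<Rightarrow> (nat set \<Rightarrow> complex) \<Rightarrow> state" where
  "liftB N f c = (\<Sum>S\<in>Pow {1..N}. f S * psB N S c)"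

definition QB :: "nat \<Rightarrow> (nat set \<Rightarrow> complex) \<Rightarrow> nat set \<Rightarrow> complex" where
  "QB N f T = (\<Sum>j\<in>{1..N}. (-1) ^ j *
      (if j \<in> T \<and> nxt N j \<in> T then f (T - {j, nxt N j}) else 0))"

lemma ps_split2:
  assumes "N \<ge> 3" "j \<in> {1..N}"
  shows "psB N S c = bondamp N (j \<in> S) j c * bondamp N (nxt N j \<in> S) (nxt N j) c *
     (\<Prod>k\<in>{1..N} - {j, nxt N j}. bondamp N (k \<in> S) k c)"
proof -
  have n: "nxt N j \<in> {1..N} - {j}" using assms nxt_in nxt_neq by auto
  have "psB N S c = bondamp N (j \<in> S) j c * (\<Prod>k\<in>{1..N} - {j}. bondamp N (k \<in> S) k c)"
    unfolding psB_def using assms by (simp add: prod.remove)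
  also have "(\<Prod>k\<in>{1..N} - {j}. bondamp N (k \<in> S) k c) =
     bondamp N (nxt N j \<in> S) (nxt N j) c * (\<Prod>k\<in>{1..N} - {j} - {nxt N j}. bondamp N (k \<in> S) k c)"
    using n by (simp add: prod.remove)
  also have "{1..N} - {j} - {nxt N j} = {1..N} - {j, nxt N j}" by auto
  finally show ?thesis by (simp add: mult.assoc)
qed

lemma Qterm_sum: "Qterm N j (\<lambda>c. \<Sum>S\<in>A. g S c) c = (\<Sum>S\<in>A. Qterm N j (g S) c)"
proof (induction A rule: infinite_finite_induct)
  case (infinite A) then show ?case by (simp add: Qterm_def)
next
  case empty then show ?case by (simp add: Qterm_def)
next
  case (insert x F)
  have "Qterm N j (\<lambda>c. \<Sum>S\<in>insert x F. g S c) c = Qterm N j (\<lambda>c. g x c + (\<Sum>S\<in>F. g S c)) c"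
    using insert by simp
  also have "\<dots> = Qterm N j (g x) c + Qterm N j (\<lambda>c. \<Sum>S\<in>F. g S c) c"
    by (simp add: Qterm_def UNIV_bool algebra_simps)
  finally show ?case using insert by simp
qed

lemma Qterm_smult: "Qterm N j (\<lambda>c. a * g c) c = a * Qterm N j g c"
  by (simp add: Qterm_def UNIV_bool algebra_simps)

lemma four_sum:
  fixes A B a b :: "bool \<Rightarrow> bool \<Rightarrow> complex"
  shows
  "(\<Sum>x\<in>UNIV. \<Sum>y\<in>UNIV. \<Sum>z\<in>UNIV. \<Sum>w\<in>UNIV. cnj (A x y * B z w) * (a x y * b z w * (R::complex))) =
   (\<Sum>x\<in>UNIV. \<Sum>y\<in>UNIV. cnj (A x y) * a x y) * (\<Sum>z\<in>UNIV. \<Sum>w\<in>UNIV. cnj (B z w) * b z w) * R"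
  by (simp add: UNIV_bool algebra_simps)

lemma Qterm_ps:
  assumes N: "N \<ge> 3" and j: "j \<in> {1..N}"
  shows "Qterm N j (psB N S) c =
    (if j \<notin> S \<and> nxt N j \<notin> S then psB N (insert j (insert (nxt N j) S)) c else 0)"
proof -
  define n where "n = nxt N j"
  have n: "n \<in> {1..N}" "n \<noteq> j" "nxt N n \<noteq> n" "nxt N n \<noteq> j"
    using nxt_in nxt_neq nxt2_neq N j unfolding n_def by auto
  define R where "R = (\<lambda>S c. \<Prod>k\<in>{1..N} - {j, n}. bondamp N (k \<in> S) k c)"
  have sp: "\<And>S c. psB N S c = bondamp N (j \<in> S) j c * bondamp N (n \<in> S) n c * R S c"
    unfolding R_def n_def using ps_split2[OF N j] by blast
  have upd: "R S (c((j, True) := x, (n, False) := y, (n, True) := z, (nxt N n, False) := w)) = R S c"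
    for x y z w
    unfolding R_def
  proof (rule prod.cong[OF refl])
    fix k assume k: "k \<in> {1..N} - {j, n}"
    have "nxt N k \<noteq> n" "nxt N k \<noteq> nxt N n" using k j n unfolding n_def
      by (simp_all add: nxt_inj)
    then show "bondamp N (k \<in> S) k (c((j, True) := x, (n, False) := y, (n, True) := z, (nxt N n, False) := w)) =
        bondamp N (k \<in> S) k c" using k by (simp add: bondamp_def)
  qed
  have b1: "bondamp N a j (c((j, True) := x, (n, False) := y, (n, True) := z, (nxt N n, False) := w)) = bd a x y"
    for a x y z w using n by (simp add: bondamp_def n_def)
  have b2: "bondamp N a n (c((j, True) := x, (n, False) := y, (n, True) := z, (nxt N n, False) := w)) = bd a z w"
    for a x y z w using n by (simp add: bondamp_def n_def)
  have "Qterm N j (psB N S) c = bondamp N True j c * bondamp N True n c *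
     (\<Sum>x\<in>UNIV. \<Sum>y\<in>UNIV. \<Sum>z\<in>UNIV. \<Sum>w\<in>UNIV. cnj (bd False x y * bd False z w) *
        (bd (j \<in> S) x y * bd (n \<in> S) z w * R S c))"
    unfolding Qterm_def n_def[symmetric] by (simp only: sp b1 b2 upd)
  also have "\<dots> = bondamp N True j c * bondamp N True n c *
      ((if j \<in> S then 0 else 1) * (if n \<in> S then 0 else 1) * R S c)"
    by (simp only: four_sum ip)
  also have "\<dots> = (if j \<notin> S \<and> n \<notin> S then psB N (insert j (insert n S)) c else 0)"
  proof -
    have "R (insert j (insert n S)) c = R S c" unfolding R_def
      by (rule prod.cong) auto
    then show ?thesis by (simp add: sp)
  qed
  finally show ?thesis by (simp add: n_def)
qed

lemma Qfrac_lift: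
  assumes N: "N \<ge> 3"
  shows "Qfrac N (liftB N f) c = liftB N (QB N f) c"
proof -
  have step: "(\<Sum>S\<in>Pow {1..N}. f S * Qterm N j (psB N S) c) =
      (\<Sum>T\<in>Pow {1..N}. (if j \<in> T \<and> nxt N j \<in> T then f (T - {j, nxt N j}) else 0) * psB N T c)"
    if j: "j \<in> {1..N}" for j
  proof -
    define D where "D = {j, nxt N j}"
    have D: "D \<subseteq> {1..N}" using j nxt_in unfolding D_def by auto
    have "(\<Sum>S\<in>Pow {1..N}. f S * Qterm N j (psB N S) c) =
        (\<Sum>S\<in>Pow {1..N}. if S \<inter> D = {} then f S * psB N (S \<union> D) c else 0)"
      by (rule sum.cong) (auto simp: Qterm_ps[OF N j] D_def insert_absorb)
    also have "\<dots> = (\<Sum>S\<in>{S\<in>Pow {1..N}. S \<inter> D = {}}. f S * psB N (S \<union> D) c)"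
      by (rule sum.inter_filter[symmetric]) simp
    also have "\<dots> = (\<Sum>T\<in>{T\<in>Pow {1..N}. D \<subseteq> T}. f (T - D) * psB N T c)"
      by (rule sum.reindex_bij_witness[where i="\<lambda>T. T - D" and j="\<lambda>S. S \<union> D"]) (use D in \<open>auto simp: Un_Diff Diff_triv\<close>)
    also have "\<dots> = (\<Sum>T\<in>Pow {1..N}. if D \<subseteq> T then f (T - D) * psB N T c else 0)"
      by (rule sum.inter_filter) simp
    also have "\<dots> = (\<Sum>T\<in>Pow {1..N}. (if j \<in> T \<and> nxt N j \<in> T then f (T - {j, nxt N j}) else 0) * psB N T c)"
      by (rule sum.cong) (auto simp: D_def)
    finally show ?thesis .
  qed
  have "Qfrac N (liftB N f) c = (\<Sum>j\<in>{1..N}. (-1) ^ j * (\<Sum>S\<in>Pow {1..N}. f S * Qterm N j (psB N S) c))"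
    unfolding Qfrac_def liftB_def by (simp add: Qterm_sum Qterm_smult)
  also have "\<dots> = (\<Sum>j\<in>{1..N}. (-1) ^ j *
      (\<Sum>T\<in>Pow {1..N}. (if j \<in> T \<and> nxt N j \<in> T then f (T - {j, nxt N j}) else 0) * psB N T c))"
    by (rule sum.cong[OF refl]) (simp only: step)
  also have "\<dots> = liftB N (QB N f) c"
    unfolding liftB_def QB_def
    by (simp add: sum_distrib_left sum_distrib_right mult.assoc) (rule sum.swap)
  finally show ?thesis .
qed

definition good :: "nat \<Rightarrow> nat \<Rightarrow> (nat set \<Rightarrow> complex) \<Rightarrow> bool" where
  "good N i f \<longleftrightarrow>
    (\<forall>S. S \<subseteq> {1..N} \<longrightarrow> prv N i \<notin> S \<longrightarrow> i \<in> S \<longrightarrow> nxt N i \<notin> S \<longrightarrow> f S = 0) \<and>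
    (\<forall>S. S \<subseteq> {1..N} \<longrightarrow> prv N i \<in> S \<longrightarrow> i \<in> S \<longrightarrow> nxt N i \<notin> S \<longrightarrow>
        f S = - f (insert (nxt N i) (S - {prv N i})))"

lemma good_QB:
  assumes N: "N \<ge> 4" and ev: "even N" and i: "i \<in> {1..N}" and g: "good N i f"
  shows "good N i (QB N f)"
proof -
  define p where "p = prv N i"
  define q where "q = nxt N i"
  have pq: "p \<in> {1..N}" "q \<in> {1..N}" "p \<noteq> i" "q \<noteq> i" "p \<noteq> q" "nxt N p = i" "nxt N i = q"
    using N i prv_in nxt_in prv_neq nxt_neq prv_neq_nxt nxt_prv unfolding p_def q_def by auto
  have nx_i: "\<And>j. j \<in> {1..N} \<Longrightarrow> nxt N j = i \<longleftrightarrow> j = p"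
    using i nxt_eq_iff unfolding p_def by blast
  have nx_q: "\<And>j. j \<in> {1..N} \<Longrightarrow> nxt N j = q \<longleftrightarrow> j = i"
    using i nxt_inj unfolding q_def by blast
  have G1: "\<And>S. S \<subseteq> {1..N} \<Longrightarrow> p \<notin> S \<Longrightarrow> i \<in> S \<Longrightarrow> q \<notin> S \<Longrightarrow> f S = 0"
    using g unfolding good_def p_def q_def by blast
  have G2: "\<And>S. S \<subseteq> {1..N} \<Longrightarrow> p \<in> S \<Longrightarrow> i \<in> S \<Longrightarrow> q \<notin> S \<Longrightarrow> f S = - f (insert q (S - {p}))"
    using g unfolding good_def p_def q_def by blast
  have H1: "QB N f T = 0" if T: "T \<subseteq> {1..N}" "p \<notin> T" "i \<in> T" "q \<notin> T" for T
    unfolding QB_def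
  proof (rule sum.neutral, rule ballI)
    fix j assume j: "j \<in> {1..N}"
    show "(-1) ^ j * (if j \<in> T \<and> nxt N j \<in> T then f (T - {j, nxt N j}) else 0) = 0"
    proof (cases "j \<in> T \<and> nxt N j \<in> T")
      case True
      then have "i \<noteq> j" "i \<noteq> nxt N j" using T nx_i[OF j] unfolding q_def by auto
      then have "f (T - {j, nxt N j}) = 0" using T by (intro G1) auto
      then show ?thesis by simp
    qed auto
  qed
  have H2: "QB N f T = - QB N f (insert q (T - {p}))"
    if T: "T \<subseteq> {1..N}" "p \<in> T" "i \<in> T" "q \<notin> T" for T
  proof -
    define T' where "T' = insert q (T - {p})"
    define F where "F = f (T - {p, i})"
    have T': "T' \<subseteq> {1..N}" "p \<notin> T'" "i \<in> T'" "q \<in> T'"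
      using T pq unfolding T'_def by auto
    define tt where "tt = (\<lambda>U j. (if j \<in> U \<and> nxt N j \<in> U then f (U - {j, nxt N j}) else 0))"
    have trm: "(-1) ^ j * tt T j + (-1) ^ j * tt T' j =
       (if j = p then (-1) ^ p * F else 0) + (if j = i then (-1) ^ i * F else 0)"
      if j: "j \<in> {1..N}" for j
    proof -
      consider "j = p" | "j = i" | "j = q" | "j \<noteq> p" "j \<noteq> i" "j \<noteq> q" "nxt N j = p"
        | "j \<noteq> p" "j \<noteq> i" "j \<noteq> q" "nxt N j \<noteq> p" by blast
      then show ?thesis
      proof cases
        case 1
        then show ?thesis using T T' pq unfolding tt_def F_def by simp
      next
        case 2
        have e: "T' - {i, q} = T - {p, i}" using T unfolding T'_def by auto
        show ?thesis using 2 T T' pq unfolding tt_def F_def by (simp add: e nx_q)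
      next
        case 3
        have "tt T' j = 0"
        proof (cases "nxt N q \<in> T'")
          case True
          have "nxt N q \<noteq> i" using nx_i[OF pq(2)] pq by auto
          then have "f (T' - {q, nxt N q}) = 0" using T' pq by (intro G1) auto
          then show ?thesis using 3 unfolding tt_def by simp
        qed (simp add: tt_def 3)
        moreover have "tt T j = 0" using 3 T unfolding tt_def by simp
        ultimately show ?thesis using 3 pq by simp
      next
        case 4
        have "tt T j = 0"
        proof (cases "j \<in> T")
          case True
          have "f (T - {j, p}) = 0" using T 4 pq by (intro G1) auto
          then show ?thesis using 4 unfolding tt_def by simp
        qed (simp add: tt_def)
        moreover have "tt T' j = 0" using 4 T' unfolding tt_def by simp
        ultimately show ?thesis using 4 by simp
      next
        case 5
        have n: "nxt N j \<noteq> i" "nxt N j \<noteq> q" using 5 nx_i[OF j] nx_q[OF j] by auto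
        have "tt T j + tt T' j = 0"
        proof (cases "j \<in> T \<and> nxt N j \<in> T")
          case True
          define U where "U = T - {j, nxt N j}"
          have e: "T' - {j, nxt N j} = insert q (U - {p})" unfolding U_def T'_def using 5 n by auto
          have "f U = - f (insert q (U - {p}))" using T 5 n unfolding U_def by (intro G2) auto
          moreover have "j \<in> T' \<and> nxt N j \<in> T'" using True 5 n unfolding T'_def by auto
          ultimately show ?thesis using True unfolding tt_def by (simp add: e U_def[symmetric])
        next
          case False
          then have "\<not> (j \<in> T' \<and> nxt N j \<in> T')" using 5 n unfolding T'_def by auto
          then show ?thesis using False unfolding tt_def by auto
        qed
        then show ?thesis using 5 by (simp add: ring_distribs[symmetric])
      qed
    qed
    have "QB N f T + QB N f T' = (\<Sum>j\<in>{1..N}. (-1) ^ j * tt T j + (-1) ^ j * tt T' j)"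
      unfolding QB_def tt_def by (simp add: sum.distrib)
    also have "\<dots> = (\<Sum>j\<in>{1..N}. (if j = p then (-1) ^ p * F else 0) + (if j = i then (-1) ^ i * F else 0))"
      by (rule sum.cong[OF refl]) (rule trm)
    also have "\<dots> = (-1) ^ p * F + (-1) ^ i * F"
      using pq i by (simp add: sum.distrib)
    also have "\<dots> = 0" using sign_prv[OF ev i] unfolding p_def by simp
    finally show ?thesis unfolding T'_def by (simp add: eq_neg_iff_add_eq_0)
  qed
  show ?thesis unfolding good_def p_def[symmetric] q_def[symmetric] using H1 H2 by blast
qed

lemma sum_triple:
  "(\<Sum>t\<in>(UNIV::(bool\<times>bool\<times>bool) set). H t) = (\<Sum>a\<in>UNIV. \<Sum>b\<in>UNIV. \<Sum>d\<in>UNIV. H (a,b,d))"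
  by (simp add: sum.cartesian_product UNIV_Times_UNIV)

definition restB :: "nat \<Rightarrow> nat \<Rightarrow> nat set \<Rightarrow> state" where
  "restB N i S c = (\<Prod>k\<in>{1..N} - {prv N i, i, nxt N i}. bondamp N (k \<in> S) k c)"

definition XX :: "nat \<Rightarrow> nat \<Rightarrow> (nat set \<Rightarrow> complex) \<Rightarrow> bool \<Rightarrow> bool \<Rightarrow> bool \<Rightarrow> state" where
  "XX N i f a b d c = (\<Sum>S\<in>{S\<in>Pow {1..N}. (prv N i \<in> S, i \<in> S, nxt N i \<in> S) = (a, b, d)}.
      f S * restB N i S c)"

lemma ps_split3:
  assumes N: "N \<ge> 3" and i: "i \<in> {1..N}"
  shows "psB N S c = tb N i (prv N i \<in> S) (i \<in> S) (nxt N i \<in> S) c * restB N i S c"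
proof -
  define p where "p = prv N i"
  define q where "q = nxt N i"
  have pq: "p \<in> {1..N}" "q \<in> {1..N}" "p \<noteq> i" "q \<noteq> i" "p \<noteq> q"
    using N i prv_in nxt_in prv_neq nxt_neq prv_neq_nxt unfolding p_def q_def by auto
  let ?g = "\<lambda>k. bondamp N (k \<in> S) k c"
  have "psB N S c = ?g p * prod ?g ({1..N} - {p})"
    unfolding psB_def using pq by (simp add: prod.remove)
  also have "prod ?g ({1..N} - {p}) = ?g i * prod ?g ({1..N} - {p} - {i})"
    using pq i by (subst prod.remove[of _ i]) auto
  also have "prod ?g ({1..N} - {p} - {i}) = ?g q * prod ?g ({1..N} - {p} - {i} - {q})"
    using pq by (subst prod.remove[of _ q]) auto
  also have "{1..N} - {p} - {i} - {q} = {1..N} - {p, i, q}" by auto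
  finally show ?thesis unfolding tb_def restB_def p_def[symmetric] q_def[symmetric] by (simp add: mult.assoc)
qed

lemma rest_out:
  assumes N: "N \<ge> 4" and i: "i \<in> {1..N}"
  shows "outside N i (restB N i S)"
  unfolding outside_def
proof (intro allI impI)
  fix c c' :: cfg assume h: "\<forall>s. s \<notin> six N i \<longrightarrow> c s = c' s"
  show "restB N i S c = restB N i S c'" unfolding restB_def
  proof (rule prod.cong[OF refl])
    fix k assume k: "k \<in> {1..N} - {prv N i, i, nxt N i}"
    have q: "nxt N i \<in> {1..N}" using i nxt_in by blast
    have "nxt N k \<noteq> i" "nxt N k \<noteq> nxt N i" "nxt N k \<noteq> nxt N (nxt N i)"
      using nxt_eq_iff[of k N i] nxt_inj[of k N i] nxt_inj[of k N "nxt N i"] k i q by auto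
    then have "(k, True) \<notin> six N i" "(nxt N k, False) \<notin> six N i"
      using k unfolding six_def by auto
    then show "bondamp N (k \<in> S) k c = bondamp N (k \<in> S) k c'"
      using h by (simp add: bondamp_def)
  qed
qed

lemma lift_XX:
  assumes N: "N \<ge> 4" and i: "i \<in> {1..N}"
  shows "liftB N f c = (\<Sum>a\<in>UNIV. \<Sum>b\<in>UNIV. \<Sum>d\<in>UNIV. tb N i a b d c * XX N i f a b d c)"
proof -
  define key where "key = (\<lambda>S. (prv N i \<in> S, i \<in> S, nxt N i \<in> S))"
  define G where "G = (\<lambda>S. tb N i (prv N i \<in> S) (i \<in> S) (nxt N i \<in> S) c * (f S * restB N i S c))"
  have "liftB N f c = (\<Sum>S\<in>Pow {1..N}. G S)"
    unfolding liftB_def G_def using ps_split3[OF _ i] N by (intro sum.cong) (auto simp: mult_ac)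
  also have "\<dots> = (\<Sum>t\<in>UNIV. \<Sum>S\<in>{S. S \<in> Pow {1..N} \<and> key S = t}. G S)"
    by (rule sum.group[symmetric]) auto
  also have "\<dots> = (\<Sum>t\<in>UNIV. tb N i (fst t) (fst (snd t)) (snd (snd t)) c * XX N i f (fst t) (fst (snd t)) (snd (snd t)) c)"
  proof (rule sum.cong[OF refl])
    fix t :: "bool \<times> bool \<times> bool"
    obtain a b d where t: "t = (a, b, d)" by (cases t) auto
    show "(\<Sum>S\<in>{S. S \<in> Pow {1..N} \<and> key S = t}. G S) =
       tb N i (fst t) (fst (snd t)) (snd (snd t)) c * XX N i f (fst t) (fst (snd t)) (snd (snd t)) c"
      unfolding XX_def t sum_distrib_left G_def key_def
      by (rule sum.cong) auto
  qed
  also have "\<dots> = (\<Sum>a\<in>UNIV. \<Sum>b\<in>UNIV. \<Sum>d\<in>UNIV. tb N i a b d c * XX N i f a b d c)"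
    by (subst sum_triple) simp
  finally show ?thesis .
qed

lemma XX_out:
  assumes N: "N \<ge> 4" and i: "i \<in> {1..N}"
  shows "outside N i (XX N i f a b d)"
  using rest_out[OF N i] unfolding outside_def XX_def
  by (metis (no_types, lifting) sum.cong)

lemma XX_FTF:
  assumes g: "good N i f"
  shows "XX N i f False True False c = 0"
  unfolding XX_def using g unfolding good_def by (intro sum.neutral) auto

lemma XX_FTT:
  assumes N: "N \<ge> 4" and i: "i \<in> {1..N}" and g: "good N i f"
  shows "XX N i f False True True c = - XX N i f True True False c"
proof -
  define p where "p = prv N i"
  define q where "q = nxt N i"
  have pq: "p \<in> {1..N}" "q \<in> {1..N}" "p \<noteq> i" "q \<noteq> i" "p \<noteq> q"
    using N i prv_in nxt_in prv_neq nxt_neq prv_neq_nxt unfolding p_def q_def by auto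
  have G2: "\<And>S. S \<subseteq> {1..N} \<Longrightarrow> p \<in> S \<Longrightarrow> i \<in> S \<Longrightarrow> q \<notin> S \<Longrightarrow> f (insert q (S - {p})) = - f S"
    using g unfolding good_def p_def q_def by fastforce
  have rs: "\<And>S. restB N i (insert q (S - {p})) = restB N i S"
    unfolding restB_def p_def q_def by (intro ext prod.cong) auto
  have "XX N i f False True True c = (\<Sum>S\<in>{S\<in>Pow {1..N}. (p \<in> S, i \<in> S, q \<in> S) = (True, True, False)}.
      f (insert q (S - {p})) * restB N i (insert q (S - {p})) c)"
    unfolding XX_def p_def[symmetric] q_def[symmetric]
    by (rule sum.reindex_bij_witness[where j="\<lambda>S. insert p (S - {q})" and i="\<lambda>S. insert q (S - {p})"])
      (use pq in \<open>auto simp: insert_absorb\<close>)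
  also have "\<dots> = (\<Sum>S\<in>{S\<in>Pow {1..N}. (p \<in> S, i \<in> S, q \<in> S) = (True, True, False)}. - (f S * restB N i S c))"
    by (rule sum.cong[OF refl]) (simp add: rs G2)
  also have "\<dots> = - XX N i f True True False c"
    unfolding XX_def p_def[symmetric] q_def[symmetric] by (simp add: sum_negf)
  finally show ?thesis .
qed

lemma vbs_lift: "vbs N = liftB N (\<lambda>S. if S = {} then 1 else 0)"
proof
  fix c
  have "liftB N (\<lambda>S. if S = {} then 1 else 0) c = (\<Sum>S\<in>Pow {1..N}. if S = {} then psB N S c else 0)"
    unfolding liftB_def by (rule sum.cong) auto
  also have "\<dots> = psB N {} c" by simp
  finally show "vbs N c = liftB N (\<lambda>S. if S = {} then 1 else 0) c"
    by (simp add: vbs_def psB_def)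
qed

lemma good0: "good N i (\<lambda>S. if S = {} then 1 else 0)"
  unfolding good_def by auto

lemma scar_lift:
  assumes N: "N \<ge> 4" and ev: "even N" and i: "i \<in> {1..N}"
  shows "\<exists>f. scar N n = liftB N f \<and> good N i f"
proof (induction n)
  case 0
  then show ?case using vbs_lift good0 by (auto simp: scar_def)
next
  case (Suc n)
  then obtain f where f: "scar N n = liftB N f" "good N i f" by blast
  have "scar N (Suc n) = Qfrac N (scar N n)" by (simp add: scar_def)
  also have "\<dots> = liftB N (QB N f)" using f(1) Qfrac_lift[of N f] N by auto
  finally show ?case using good_QB[OF N ev i f(2)] by blast
qed

theorem lemma1:
  fixes N n i :: nat
  assumes "N \<ge> 4" and "even N" and "i \<in> {1..N}"
  shows "\<exists>X0 X1 X2.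
           (\<forall>\<sigma> \<sigma>'. outside N i (X0 \<sigma> \<sigma>')) \<and> outside N i X1 \<and> outside N i X2 \<and>
           (\<forall>c\<in>Cfg N.
              scar N n c =
                (\<Sum>\<sigma>\<in>UNIV. \<Sum>\<sigma>'\<in>UNIV. tb N i \<sigma> False \<sigma>' c * X0 \<sigma> \<sigma>' c)
                + (tb N i True True False c - tb N i False True True c) * X1 c
                + tb N i True True True c * X2 c)"
proof -
  obtain f where f: "scar N n = liftB N f" "good N i f" using scar_lift[OF assms] by blast
  define X0 where "X0 = (\<lambda>a d. XX N i f a False d)"
  define X1 where "X1 = XX N i f True True False"
  define X2 where "X2 = XX N i f True True True"
  have o: "(\<forall>\<sigma> \<sigma>'. outside N i (X0 \<sigma> \<sigma>')) \<and> outside N i X1 \<and> outside N i X2"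
    unfolding X0_def X1_def X2_def using XX_out[OF assms(1,3)] by blast
  have e: "scar N n c =
                (\<Sum>\<sigma>\<in>UNIV. \<Sum>\<sigma>'\<in>UNIV. tb N i \<sigma> False \<sigma>' c * X0 \<sigma> \<sigma>' c)
                + (tb N i True True False c - tb N i False True True c) * X1 c
                + tb N i True True True c * X2 c" for c
  proof -
    have "scar N n c = (\<Sum>a\<in>UNIV. \<Sum>b\<in>UNIV. \<Sum>d\<in>UNIV. tb N i a b d c * XX N i f a b d c)"
      using f(1) lift_XX[OF assms(1,3)] by simp
    then show ?thesis unfolding X0_def X1_def X2_def
      using XX_FTF[OF f(2), of c] XX_FTT[OF assms(1,3) f(2), of c]
      by (simp add: UNIV_bool algebra_simps)
  qed
  show ?thesis using o e by blast
qed

end
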